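(* Let $N\ge 3$ and $0<\gamma_1\le\dots\le\gamma_N$. There exists a sum-rate optimal spanning tree $T$ on $\{1,\dots,N\}$ in which vertices $N$ and $N-1$ both have degree $1$ and, writing $i$ for the unique neighbor of $N$ and $j$ for the unique neighbor of $N-1$, one has $\gamma_i\ge\gamma_j$.
   Context: For distinct $i,j$ put $\varphi(i,j)=\log_2\!\big(\gamma_i+\frac{\gamma_i}{\gamma_i+\gamma_j}\big)$. For a spanning tree $T$ on $\{1,\dots,N\}$ with neighbor sets $A_i^T$, define $R_{\mathrm s}(T)=\frac{1}{2(N-1)}\sum_{i=1}^N \min_{j\in A_i^T}\varphi(i,j)$. A spanning tree is called sum-rate optimal if it maximizes $R_{\mathrm s}$ over all spanning trees on $\{1,\dots,N\}$. *)

theory Defs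
  imports "HOL-Analysis.Analysis"
begin

definition tree_vertices :: "nat \<Rightarrow> nat set" where
  "tree_vertices N = {1..N}"

definition adj_rel :: "nat set set \<Rightarrow> (nat \<times> nat) set" where
  "adj_rel E = {(a, b). {a, b} \<in> E \<and> a \<noteq> b}"

definition is_spanning_tree :: "nat \<Rightarrow> nat set set \<Rightarrow> bool" where
  "is_spanning_tree N E \<longleftrightarrow>
     E \<subseteq> {{a, b} | a b. a \<in> {1..N} \<and> b \<in> {1..N} \<and> a \<noteq> b} \<and>
     card E = N - 1 \<and>
     (\<forall>a\<in>{1..N}. \<forall>b\<in>{1..N}. (a, b) \<in> (adj_rel E)\<^sup>*)"

definition nbrs :: "nat set set \<Rightarrow> nat \<Rightarrow> nat set" where
  "nbrs E i = {j. j \<noteq> i \<and> {i, j} \<in> E}"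

definition tree_degree :: "nat set set \<Rightarrow> nat \<Rightarrow> nat" where
  "tree_degree E i = card (nbrs E i)"

definition phi :: "(nat \<Rightarrow> real) \<Rightarrow> nat \<Rightarrow> nat \<Rightarrow> real" where
  "phi \<gamma> i j = log 2 (\<gamma> i + \<gamma> i / (\<gamma> i + \<gamma> j))"

definition sum_rate :: "nat \<Rightarrow> (nat \<Rightarrow> real) \<Rightarrow> nat set set \<Rightarrow> real" where
  "sum_rate N \<gamma> E =
     (1 / (2 * (real N - 1))) * (\<Sum>i = 1..N. Min (phi \<gamma> i ` nbrs E i))"

definition sum_rate_optimal :: "nat \<Rightarrow> (nat \<Rightarrow> real) \<Rightarrow> nat set set \<Rightarrow> bool" where
  "sum_rate_optimal N \<gamma> E \<longleftrightarrow> is_spanning_tree N E \<and>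
     (\<forall>E'. is_spanning_tree N E' \<longrightarrow> sum_rate N \<gamma> E' \<le> sum_rate N \<gamma> E)"

end

theory Submission
  imports Defs
begin

lemma short_path:
  assumes "(a,b) \<in> R\<^sup>*"
  shows "\<exists>n f. f 0 = a \<and> f n = b \<and> (\<forall>i<n. (f i, f (Suc i)) \<in> R) \<and> inj_on f {0..n}"
proof -
  let ?P = "\<lambda>n. \<exists>f. f 0 = a \<and> f n = b \<and> (\<forall>i<n. (f i, f (Suc i)) \<in> R)"
  have ex: "\<exists>n. ?P n" using assms unfolding rtrancl_power relpow_fun_conv by blast
  define n where "n = (LEAST n. ?P n)"
  have Pn: "?P n" unfolding n_def by (rule LeastI_ex[OF ex])
  have min: "\<And>m. m < n \<Longrightarrow> \<not> ?P m" unfolding n_def by (rule not_less_Least)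
  obtain f where f0: "f 0 = a" and fn: "f n = b" and fs: "\<forall>i<n. (f i, f (Suc i)) \<in> R"
    using Pn by blast
  have "inj_on f {0..n}"
  proof (rule ccontr)
    assume "\<not> inj_on f {0..n}"
    then obtain i j where ij: "i < j" "j \<le> n" "f i = f j"
      unfolding inj_on_def by (metis atLeastAtMost_iff linorder_neqE_nat)
    define g where "g k = (if k \<le> i then f k else f (k + (j - i)))" for k
    have "?P (n - (j - i))"
    proof (intro exI conjI allI impI)
      show "g 0 = a" using f0 by (simp add: g_def)
      show "g (n - (j - i)) = b"
      proof (cases "j = n")
        case True then show ?thesis using fn ij by (simp add: g_def)
      next
        case False
        then have "\<not> n - (j - i) \<le> i" "n - (j - i) + (j - i) = n" using ij by arith+
        then show ?thesis using fn unfolding g_def by simp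
      qed
      fix k assume k: "k < n - (j - i)"
      show "(g k, g (Suc k)) \<in> R"
      proof (cases "k < i")
        case True then show ?thesis using fs ij k by (auto simp: g_def)
      next
        case False
        then have "k \<ge> i" by simp
        show ?thesis
        proof (cases "k = i")
          case True
          then show ?thesis using fs ij k
            by (auto simp: g_def)
        next
          case False
          with \<open>k \<ge> i\<close> have "k > i" by simp
          then show ?thesis using fs ij k by (auto simp: g_def)
        qed
      qed
    qed
    moreover have "n - (j - i) < n" using ij by simp
    ultimately show False using min by blast
  qed
  then show ?thesis using f0 fn fs by blast
qed

definition hh :: "real \<Rightarrow> real" where "hh s = log 2 (1 + 1 / s)"

lemma hh_mono: "0 < s \<Longrightarrow> s \<le> t \<Longrightarrow> hh t \<le> hh s"
  unfolding hh_def
  by (intro log_le_cancel_iff[THEN iffD2]) (auto simp: frac_le add_pos_pos order.strict_trans2)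

lemma phi_split:
  assumes "0 < \<gamma> i" "0 < \<gamma> j"
  shows "phi \<gamma> i j = log 2 (\<gamma> i) + hh (\<gamma> i + \<gamma> j)"
proof -
  have "\<gamma> i + \<gamma> i / (\<gamma> i + \<gamma> j) = \<gamma> i * (1 + 1 / (\<gamma> i + \<gamma> j))"
    using assms by (simp add: field_simps)
  moreover have "0 < 1 + 1 / (\<gamma> i + \<gamma> j)" using assms by (simp add: add_pos_pos)
  ultimately show ?thesis using assms unfolding phi_def hh_def by (simp add: log_mult)
qed

context
  fixes N :: nat and \<gamma> :: "nat \<Rightarrow> real"
  assumes N3: "N \<ge> 3"
    and pos: "\<And>i. i \<in> {1..N} \<Longrightarrow> 0 < \<gamma> i"
    and mono: "\<And>i j. i \<in> {1..N} \<Longrightarrow> j \<in> {1..N} \<Longrightarrow> i \<le> j \<Longrightarrow> \<gamma> i \<le> \<gamma> j"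
begin

lemma gam1: "v \<in> {1..N} \<Longrightarrow> \<gamma> 1 \<le> \<gamma> v"
  using mono[of 1 v] N3 by auto

lemma phi_le1: "v \<in> {1..N} \<Longrightarrow> w \<in> {1..N} \<Longrightarrow> phi \<gamma> v w \<le> phi \<gamma> v 1"
  using phi_split[of \<gamma> v w] phi_split[of \<gamma> v 1] pos[of v] pos[of w] pos[of 1] gam1[of w] N3
    hh_mono[of "\<gamma> v + \<gamma> 1" "\<gamma> v + \<gamma> w"] by auto

lemma edge_range:
  assumes "is_spanning_tree N E" "{a, b} \<in> E" "a \<noteq> b"
  shows "a \<in> {1..N}" "b \<in> {1..N}"
proof -
  obtain c d where "{a, b} = {c, d}" "c \<in> {1..N}" "d \<in> {1..N}"
    using assms unfolding is_spanning_tree_def by blast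
  then show "a \<in> {1..N}" "b \<in> {1..N}" by (auto simp: doubleton_eq_iff)
qed

lemma nbrs_sub: "is_spanning_tree N E \<Longrightarrow> nbrs E v \<subseteq> {1..N}"
  unfolding nbrs_def using edge_range by blast

lemma nbrs_fin: "is_spanning_tree N E \<Longrightarrow> finite (nbrs E v)"
  using nbrs_sub finite_subset by blast

lemma nbrs_ne:
  assumes T: "is_spanning_tree N E" and v: "v \<in> {1..N}"
  shows "\<exists>w. w \<in> nbrs E v"
proof -
  obtain u where u: "u \<in> {1..N}" "u \<noteq> v" using N3 v
    by (metis atLeastAtMost_iff le_trans nat_le_linear numeral_le_one_iff order_refl semiring_norm(70) One_nat_def Suc_leI le_antisym zero_less_Suc numeral_3_eq_3 Suc_n_not_le_n)
  have "(v, u) \<in> (adj_rel E)\<^sup>*" using T u v unfolding is_spanning_tree_def by blast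
  then obtain w where "(v, w) \<in> adj_rel E" using u(2) by (metis converse_rtranclE)
  then show ?thesis unfolding adj_rel_def nbrs_def by auto
qed

lemma term_le:
  "is_spanning_tree N E \<Longrightarrow> w \<in> nbrs E v \<Longrightarrow> Min (phi \<gamma> v ` nbrs E v) \<le> phi \<gamma> v w"
  using nbrs_fin by (intro Min_le) auto

lemma term_le1:
  assumes T: "is_spanning_tree N E" and v: "v \<in> {1..N}"
  shows "Min (phi \<gamma> v ` nbrs E v) \<le> phi \<gamma> v 1"
proof -
  obtain w where w: "w \<in> nbrs E v" using nbrs_ne[OF T v] by blast
  then have "w \<in> {1..N}" using nbrs_sub[OF T] by blast
  then show ?thesis using term_le[OF T w] phi_le1[OF v] by fastforce
qed


lemma main_ineq:
  assumes T: "is_spanning_tree N E"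
  shows "(\<Sum>v = 1..N. Min (phi \<gamma> v ` nbrs E v)) \<le> phi \<gamma> 1 N + (\<Sum>v = 2..N. phi \<gamma> v 1)"
proof -
  define t where "t v = Min (phi \<gamma> v ` nbrs E v)" for v
  define l where "l v = phi \<gamma> v 1 - t v" for v
  have N1: "1 \<in> {1..N}" "N \<in> {1..N}" using N3 by auto
  have "(1, N) \<in> (adj_rel E)\<^sup>*" using T N1 unfolding is_spanning_tree_def by blast
  from short_path[OF this] obtain n f where f0: "f 0 = 1" and fn: "f n = N" and fs: "\<forall>i<n. (f i, f (Suc i)) \<in> adj_rel E"
    and inj: "inj_on f {0..n}" by blast
  have n1: "n \<ge> 1"
  proof (rule ccontr)
    assume "\<not> n \<ge> 1"
    then have "n = 0" by simp
    then show False using f0 fn N3 by simp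
  qed
  have frange: "f i \<in> {1..N}" if "i \<le> n" for i
  proof (cases i)
    case 0 then show ?thesis using f0 N1 by simp
  next
    case (Suc k)
    then have "(f k, f i) \<in> adj_rel E" using fs that by auto
    then show ?thesis using edge_range[OF T] unfolding adj_rel_def by blast
  qed
  have fne1: "f i \<noteq> 1" if "1 \<le> i" "i \<le> n" for i
    using inj_on_eq_iff[OF inj, of i 0] that f0 by auto
  define c where "c i = \<gamma> (f i)" for i
  define a where "a = \<gamma> 1"
  have cpos: "0 < c i" if "i \<le> n" for i using pos frange that unfolding c_def by blast
  have apos: "0 < a" using pos N1 unfolding a_def by blast
  have ca: "a \<le> c i" if "i \<le> n" for i using gam1 frange that unfolding c_def a_def by blast
  have nb_fwd: "f (Suc i) \<in> nbrs E (f i)" if "i < n" for i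
    using fs that unfolding adj_rel_def nbrs_def by auto
  have nb_bwd: "f i \<in> nbrs E (f (Suc i))" if "i < n" for i
    using fs that unfolding adj_rel_def nbrs_def by (auto simp: insert_commute)
  have stepC: "l (f i) \<ge> hh (c (i - 1) + c i) - hh (c i + c (Suc i))" if "1 \<le> i" "i < n" for i
  proof -
    have "t (f i) \<le> phi \<gamma> (f i) (f (Suc i))" unfolding t_def using term_le[OF T nb_fwd] that by simp
    also have "\<dots> = log 2 (c i) + hh (c i + c (Suc i))"
      using phi_split cpos that unfolding c_def by (simp add: Suc_leI)
    finally have 1: "t (f i) \<le> log 2 (c i) + hh (c i + c (Suc i))" .
    have 2: "phi \<gamma> (f i) 1 = log 2 (c i) + hh (c i + a)"
      using phi_split[of \<gamma> "f i" 1] cpos[of i] apos that unfolding c_def a_def by simp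
    have 3: "hh (c (i - 1) + c i) \<le> hh (c i + a)"
      using hh_mono[of "c i + a" "c (i - 1) + c i"] ca[of "i - 1"] cpos[of i] apos that by simp
    show ?thesis using 1 2 3 unfolding l_def by simp
  qed
  have stepN: "l (f n) \<ge> hh (c n + a) - hh (c n + c (n - 1))"
  proof -
    have nb: "f (n - 1) \<in> nbrs E (f n)" using nb_bwd[of "n - 1"] n1 by simp
    have "t (f n) \<le> phi \<gamma> (f n) (f (n - 1))" unfolding t_def using term_le[OF T nb] by simp
    also have "\<dots> = log 2 (c n) + hh (c n + c (n - 1))"
      using phi_split cpos unfolding c_def by simp
    finally have 1: "t (f n) \<le> log 2 (c n) + hh (c n + c (n - 1))" .
    have 2: "phi \<gamma> (f n) 1 = log 2 (c n) + hh (c n + a)"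
      using phi_split[of \<gamma> "f n" 1] cpos[of n] apos unfolding c_def a_def by simp
    show ?thesis using 1 2 unfolding l_def by simp
  qed
  have tele: "k < n \<Longrightarrow> (\<Sum>i = 1..k. l (f i)) \<ge> hh (a + c 1) - hh (c k + c (Suc k))" for k
  proof (induction k)
    case 0 then show ?case using f0 unfolding c_def a_def by simp
  next
    case (Suc k)
    then have "(\<Sum>i = 1..Suc k. l (f i)) = (\<Sum>i = 1..k. l (f i)) + l (f (Suc k))" by simp
    then show ?case using Suc stepC[of "Suc k"] by simp
  qed
  have "(\<Sum>i = 1..n. l (f i)) = (\<Sum>i = 1..n - 1. l (f i)) + l (f n)"
  proof -
    obtain m where m: "n = Suc m" using n1 by (cases n) auto
    show ?thesis unfolding m by simp
  qed
  moreover have "(\<Sum>i = 1..n - 1. l (f i)) \<ge> hh (a + c 1) - hh (c (n - 1) + c n)"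
    using tele[of "n - 1"] n1 by simp
  moreover have "hh (c (n - 1) + c n) \<le> hh (a + c n)"
    using hh_mono[of "a + c n" "c (n - 1) + c n"] ca[of "n - 1"] cpos[of n] apos by simp
  ultimately have pathsum: "(\<Sum>i = 1..n. l (f i)) \<ge> hh (a + c 1) - hh (a + c n)"
    using stepN by (simp add: add.commute)
  have lnn: "0 \<le> l v" if "v \<in> {2..N}" for v
    using term_le1[OF T, of v] that unfolding l_def t_def by auto
  have sub: "f ` {1..n} \<subseteq> {2..N}"
  proof
    fix x assume "x \<in> f ` {1..n}"
    then obtain i where "i \<in> {1..n}" "x = f i" by blast
    then show "x \<in> {2..N}" using frange[of i] fne1[of i] by auto
  qed
  have "(\<Sum>i = 1..n. l (f i)) = (\<Sum>v \<in> f ` {1..n}. l v)"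
    using inj by (subst sum.reindex) (auto intro: inj_on_subset)
  also have "\<dots> \<le> (\<Sum>v = 2..N. l v)" using sub lnn by (intro sum_mono2) auto
  finally have L: "(\<Sum>v = 2..N. l v) \<ge> hh (a + c 1) - hh (a + c n)" using pathsum by simp
  have t1: "t 1 \<le> log 2 a + hh (a + c 1)"
  proof -
    have "t 1 \<le> phi \<gamma> 1 (f 1)" unfolding t_def using term_le[OF T nb_fwd[of 0]] n1 f0 by simp
    also have "\<dots> = log 2 a + hh (a + c 1)"
      using phi_split[of \<gamma> 1 "f 1"] apos cpos[of 1] n1 unfolding a_def c_def by simp
    finally show ?thesis .
  qed
  have p1N: "phi \<gamma> 1 N = log 2 a + hh (a + c n)"
    using phi_split[of \<gamma> 1 N] apos cpos[of n] fn unfolding a_def c_def by simp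
  have "(\<Sum>v = 1..N. t v) = t 1 + (\<Sum>v = 2..N. t v)"
    using sum.atLeast_Suc_atMost[of 1 N t] N3 by (simp add: numeral_2_eq_2)
  also have "(\<Sum>v = 2..N. t v) = (\<Sum>v = 2..N. phi \<gamma> v 1) - (\<Sum>v = 2..N. l v)"
    unfolding l_def by (simp add: sum_subtractf)
  finally show ?thesis using L t1 p1N unfolding t_def by simp
qed


definition star :: "nat set set" where "star = (\<lambda>j. {1, j}) ` {2..N}"

lemma star_mem: "{x, y} \<in> star \<longleftrightarrow> (\<exists>k\<in>{2..N}. {x, y} = {1, k})"
  unfolding star_def by blast

lemma star_nbrs_leaf:
  assumes v: "v \<in> {2..N}" shows "nbrs star v = {1}"
proof
  show "nbrs star v \<subseteq> {1}"
  proof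
    fix j assume "j \<in> nbrs star v"
    then have "j \<noteq> v" "{v, j} \<in> star" unfolding nbrs_def by auto
    then obtain k where "{v, j} = {1, k}" unfolding star_mem by blast
    then have "(v = 1 \<and> j = k) \<or> (v = k \<and> j = 1)" by (simp add: doubleton_eq_iff)
    then show "j \<in> {1}" using v by auto
  qed
  have "{v, 1} = {1, v}" by (rule insert_commute)
  then have "{v, 1} \<in> star" using v unfolding star_mem by blast
  then show "{1} \<subseteq> nbrs star v" using v unfolding nbrs_def by auto
qed

lemma star_nbrs_1: "nbrs star 1 = {2..N}"
proof
  show "nbrs star 1 \<subseteq> {2..N}"
  proof
    fix j assume "j \<in> nbrs star 1"
    then have "j \<noteq> 1" "{1, j} \<in> star" unfolding nbrs_def by auto
    then obtain k where k: "k \<in> {2..N}" "{1, j} = {1, k}" unfolding star_mem by blast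
    then have "j = k" using \<open>j \<noteq> 1\<close> by (metis doubleton_eq_iff)
    then show "j \<in> {2..N}" using k by simp
  qed
  show "{2..N} \<subseteq> nbrs star 1"
  proof
    fix j assume j: "j \<in> {2..N}"
    then have "{1, j} \<in> star" unfolding star_mem by blast
    then show "j \<in> nbrs star 1" using j unfolding nbrs_def by auto
  qed
qed

lemma star_tree: "is_spanning_tree N star"
proof -
  have A: "star \<subseteq> {{a, b} | a b. a \<in> {1..N} \<and> b \<in> {1..N} \<and> a \<noteq> b}"
  proof
    fix x assume "x \<in> star"
    then obtain j where j: "j \<in> {2..N}" "x = {1, j}" unfolding star_def by blast
    then have "x = {1, j} \<and> (1::nat) \<in> {1..N} \<and> j \<in> {1..N} \<and> (1::nat) \<noteq> j" by auto
    then show "x \<in> {{a, b} | a b. a \<in> {1..N} \<and> b \<in> {1..N} \<and> a \<noteq> b}" by blast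
  qed
  have "inj_on (\<lambda>j. {1::nat, j}) {2..N}"
    unfolding inj_on_def by (auto simp: doubleton_eq_iff)
  then have B: "card star = N - 1" unfolding star_def by (simp add: card_image)
  have to1: "(a, 1) \<in> (adj_rel star)\<^sup>* \<and> (1, a) \<in> (adj_rel star)\<^sup>*" if "a \<in> {1..N}" for a
  proof (cases "a = 1")
    case True then show ?thesis by simp
  next
    case False
    then have a2: "a \<in> {2..N}" using that by auto
    have "{a, 1} \<in> star" "{1, a} \<in> star" using a2 unfolding star_def by (auto simp: insert_commute)
    then have "(a, 1) \<in> adj_rel star" "(1, a) \<in> adj_rel star"
      unfolding adj_rel_def using False by auto
    then show ?thesis by auto
  qed
  have C: "\<forall>a\<in>{1..N}. \<forall>b\<in>{1..N}. (a, b) \<in> (adj_rel star)\<^sup>*"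
    using to1 by (meson rtrancl_trans)
  show ?thesis unfolding is_spanning_tree_def using A B C by blast
qed

lemma star_sum:
  "(\<Sum>v = 1..N. Min (phi \<gamma> v ` nbrs star v)) = phi \<gamma> 1 N + (\<Sum>v = 2..N. phi \<gamma> v 1)"
proof -
  have m1: "Min (phi \<gamma> 1 ` nbrs star 1) = phi \<gamma> 1 N"
    unfolding star_nbrs_1
  proof (rule Min_eqI)
    show "finite (phi \<gamma> 1 ` {2..N})" by simp
    show "phi \<gamma> 1 N \<in> phi \<gamma> 1 ` {2..N}" using N3 by auto
    fix y assume "y \<in> phi \<gamma> 1 ` {2..N}"
    then obtain j where j: "j \<in> {2..N}" "y = phi \<gamma> 1 j" by blast
    have "0 < \<gamma> 1" "0 < \<gamma> j" "0 < \<gamma> N" using pos j N3 by auto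
    moreover have "\<gamma> j \<le> \<gamma> N" using mono[of j N] j by auto
    ultimately show "phi \<gamma> 1 N \<le> y" using j phi_split[of \<gamma> 1 j] phi_split[of \<gamma> 1 N]
      hh_mono[of "\<gamma> 1 + \<gamma> j" "\<gamma> 1 + \<gamma> N"] by simp
  qed
  have "(\<Sum>v = 2..N. Min (phi \<gamma> v ` nbrs star v)) = (\<Sum>v = 2..N. phi \<gamma> v 1)"
    by (rule sum.cong) (auto simp: star_nbrs_leaf)
  moreover have "(\<Sum>v = 1..N. Min (phi \<gamma> v ` nbrs star v))
      = Min (phi \<gamma> 1 ` nbrs star 1) + (\<Sum>v = 2..N. Min (phi \<gamma> v ` nbrs star v))"
    using sum.atLeast_Suc_atMost[of 1 N "\<lambda>v. Min (phi \<gamma> v ` nbrs star v)"] N3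
    by (simp add: numeral_2_eq_2)
  ultimately show ?thesis using m1 by simp
qed

lemma final:
  "\<exists>E. sum_rate_optimal N \<gamma> E \<and>
           tree_degree E N = 1 \<and> tree_degree E (N - 1) = 1 \<and>
           (\<forall>i j. nbrs E N = {i} \<longrightarrow> nbrs E (N - 1) = {j} \<longrightarrow> \<gamma> i \<ge> \<gamma> j)"
proof (intro exI conjI allI impI)
  have l1: "nbrs star N = {1}" "nbrs star (N - 1) = {1}"
    using star_nbrs_leaf[of N] star_nbrs_leaf[of "N - 1"] N3 by auto
  then show "tree_degree star N = 1" "tree_degree star (N - 1) = 1" unfolding tree_degree_def by simp_all
  fix i j assume "nbrs star N = {i}" "nbrs star (N - 1) = {j}"
  then show "\<gamma> i \<ge> \<gamma> j" using l1 by auto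
next
  show "sum_rate_optimal N \<gamma> star"
    unfolding sum_rate_optimal_def
  proof (intro conjI allI impI)
    show "is_spanning_tree N star" by (rule star_tree)
    fix E' assume "is_spanning_tree N E'"
    then have "(\<Sum>v = 1..N. Min (phi \<gamma> v ` nbrs E' v)) \<le> (\<Sum>v = 1..N. Min (phi \<gamma> v ` nbrs star v))"
      using main_ineq star_sum by simp
    moreover have "0 \<le> 1 / (2 * (real N - 1))" using N3 by simp
    ultimately show "sum_rate N \<gamma> E' \<le> sum_rate N \<gamma> star"
      unfolding sum_rate_def by (rule mult_left_mono)
  qed
qed

end


theorem lemma4:
  fixes N :: nat and \<gamma> :: "nat \<Rightarrow> real"
  assumes "N \<ge> 3"
    and "\<And>i. i \<in> {1..N} \<Longrightarrow> 0 < \<gamma> i"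
    and "\<And>i j. i \<in> {1..N} \<Longrightarrow> j \<in> {1..N} \<Longrightarrow> i \<le> j \<Longrightarrow> \<gamma> i \<le> \<gamma> j"
  shows "\<exists>E. sum_rate_optimal N \<gamma> E \<and>
           tree_degree E N = 1 \<and> tree_degree E (N - 1) = 1 \<and>
           (\<forall>i j. nbrs E N = {i} \<longrightarrow> nbrs E (N - 1) = {j} \<longrightarrow> \<gamma> i \<ge> \<gamma> j)"
  using assms by (rule final)

end
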